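(* Let $\lambda>0$ and let $(B,D)$ be a random pair as in the context. If $\lambda\mathbf E[B1_{\{D=\infty\}}]<1$, $\mathbf E[\min\{B,D\}]<\infty$ and $\rho=\lambda\mathbf E[B]>1$, then the equation $z_\infty=\lambda\mathbf E[\min\{z_\infty B,D\}]$ has a unique solution $z_\infty\in(0,\infty)$.
   Context: $(B,D)$ is a random pair with values in $[0,\infty]^2$ whose law $\vartheta$ satisfies $\vartheta(\{0\}\times[0,\infty])=\vartheta([0,\infty]\times\{0\})=\vartheta(\{(\infty,\infty)\})=0$; arithmetic on $[0,\infty]$ with $x\cdot\infty=\infty$ for $x>0$. *)

theory Defs
  imports "HOL-Probability.Probability"
begin

end

theory Submission
  imports Defs
begin

lemma scale_min:
  fixes x y :: ennreal and c :: real
  assumes "c > 0"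
  shows "min (ennreal c * x) y = ennreal c * min x (ennreal (1/c) * y)"
proof -
  have 1: "ennreal c * (ennreal (1/c) * y) = y"
    using assms by (simp add: mult.assoc[symmetric] ennreal_mult''[symmetric])
  have 2: "ennreal c * min x w = min (ennreal c * x) (ennreal c * w)" for w :: ennreal
  proof (cases "x \<le> w")
    case True
    then show ?thesis by (simp add: mult_left_mono min_def)
  next
    case False
    then have "ennreal c * w \<le> ennreal c * x" by (simp add: mult_left_mono)
    then show ?thesis using False by (auto simp: min_def intro: antisym)
  qed
  show ?thesis by (simp add: 2 1)
qed

lemma arch_small:
  fixes d e :: real assumes "e > 0" "d \<ge> 0"
  shows "\<exists>n. d / real (Suc n) < e"
proof -
  obtain n where n: "d / e < real n" using reals_Archimedean2 by blast
  then have "d < e * real n" using assms by (simp add: field_simps)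
  also have "\<dots> \<le> e * real (Suc n)" using assms by simp
  finally show ?thesis using assms by (auto simp: field_simps)
qed

lemma arch_big:
  fixes d s :: real assumes "d > 0"
  shows "\<exists>n. s < real (Suc n) * d"
proof -
  obtain n where n: "s / d < real n" using reals_Archimedean2 by blast
  then have "s < real n * d" using assms by (simp add: field_simps)
  also have "\<dots> \<le> real (Suc n) * d" using assms by simp
  finally show ?thesis by blast
qed


lemma mult_min_ennreal:
  fixes x w :: ennreal
  shows "ennreal c * min x w = min (ennreal c * x) (ennreal c * w)"
proof (cases "x \<le> w")
  case True
  then show ?thesis by (simp add: mult_left_mono min.absorb1)
next
  case False
  then have "ennreal c * w \<le> ennreal c * x" by (simp add: mult_left_mono)
  then show ?thesis using False by (simp add: min.absorb2)
qed

lemma pt_le: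
  fixes a b :: ennreal assumes "0 \<le> z1" "z1 \<le> z2"
  shows "ennreal z1 * min (ennreal z2 * a) b \<le> ennreal z2 * min (ennreal z1 * a) b"
proof -
  have "ennreal z1 * min (ennreal z2 * a) b = min (ennreal z1 * ennreal z2 * a) (ennreal z1 * b)"
    by (simp add: mult_min_ennreal mult.assoc)
  also have "\<dots> \<le> min (ennreal z2 * ennreal z1 * a) (ennreal z2 * b)"
    using assms by (intro min.mono) (auto simp: mult.commute intro!: mult_left_mono ennreal_leI)
  also have "\<dots> = ennreal z2 * min (ennreal z1 * a) b"
    by (simp add: mult_min_ennreal mult.assoc)
  finally show ?thesis .
qed

lemma pt_eq:
  fixes a b :: ennreal assumes "0 < z1" "z1 < z2" "b \<noteq> 0"
    and eq: "ennreal z2 * min (ennreal z1 * a) b \<le> ennreal z1 * min (ennreal z2 * a) b"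
  shows "min (ennreal z1 * a) b = ennreal z1 * a"
proof (rule ccontr)
  assume "min (ennreal z1 * a) b \<noteq> ennreal z1 * a"
  then have lt: "b < ennreal z1 * a" by (auto simp: min_def split: if_splits)
  then have "b < \<infinity>" using top.not_eq_extremum by fastforce
  then obtain d where d: "b = ennreal d" "d \<ge> 0" by (cases b) auto
  with assms have dpos: "d > 0" by auto
  have "ennreal (z2 * d) = ennreal z2 * min (ennreal z1 * a) b"
    using lt d assms by (simp add: min.absorb2 ennreal_mult'')
  also have "\<dots> \<le> ennreal z1 * min (ennreal z2 * a) b" by (rule eq)
  also have "\<dots> \<le> ennreal z1 * b" by (intro mult_left_mono) auto
  also have "\<dots> = ennreal (z1 * d)" using d assms by (simp add: ennreal_mult'')
  finally have "z2 * d \<le> z1 * d" using assms dpos by (subst (asm) ennreal_le_iff) auto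
  with assms dpos show False by simp
qed


theorem mainTheorem7:
  fixes \<theta> :: "(ennreal \<times> ennreal) measure" and lam :: real
  assumes prob: "prob_space \<theta>"
    and sets_eq: "sets \<theta> = sets borel"
    and B0: "emeasure \<theta> ({0} \<times> UNIV) = 0"
    and D0: "emeasure \<theta> (UNIV \<times> {0}) = 0"
    and inf_inf: "emeasure \<theta> {(\<infinity>, \<infinity>)} = 0"
    and lam_pos: "lam > 0"
    and cond1: "ennreal lam * (\<integral>\<^sup>+ x. fst x * indicator {y. snd y = \<infinity>} x \<partial>\<theta>) < 1"
    and cond2: "(\<integral>\<^sup>+ x. min (fst x) (snd x) \<partial>\<theta>) < \<infinity>"
    and rho: "ennreal lam * (\<integral>\<^sup>+ x. fst x \<partial>\<theta>) > 1"
  shows "\<exists>!z::real. 0 < z \<and>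
           ennreal z = ennreal lam * (\<integral>\<^sup>+ x. min (ennreal z * fst x) (snd x) \<partial>\<theta>)"
proof -
  have "(fst :: ennreal \<times> ennreal \<Rightarrow> ennreal) \<in> borel_measurable borel"
    by (intro borel_measurable_continuous_onI continuous_intros)
  then have mfst[measurable]: "fst \<in> borel_measurable \<theta>"
    by (subst measurable_cong_sets[OF sets_eq refl])
  have "(snd :: ennreal \<times> ennreal \<Rightarrow> ennreal) \<in> borel_measurable borel"
    by (intro borel_measurable_continuous_onI continuous_intros)
  then have msnd[measurable]: "snd \<in> borel_measurable \<theta>"
    by (subst measurable_cong_sets[OF sets_eq refl])
  have AED: "AE x in \<theta>. snd x \<noteq> 0"
  proof (rule AE_I')
    have "closed (UNIV \<times> {0::ennreal} :: (ennreal \<times> ennreal) set)"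
      by (intro closed_Times) auto
    then have "UNIV \<times> {0} \<in> sets \<theta>" unfolding sets_eq by (rule borel_closed)
    then show "UNIV \<times> {0} \<in> null_sets \<theta>" using D0 by (simp add: null_sets_def)
  qed auto
  define F where "F z = (\<integral>\<^sup>+ x. min (ennreal z * fst x) (snd x) \<partial>\<theta>)" for z :: real
  define \<Phi> where "\<Phi> z = ennreal lam * F z" for z
  have Fmono: "F z \<le> F z'" if "z \<le> z'" for z z'
    unfolding F_def using that
    by (intro nn_integral_mono min.mono mult_right_mono) (auto intro: ennreal_leI)
  have \<Phi>mono: "\<Phi> z \<le> \<Phi> z'" if "z \<le> z'" for z z'
    unfolding \<Phi>_def using Fmono[OF that] by (rule mult_left_mono) auto
  have uniq: False if z: "0 < z1" "z1 < z2" and f1: "ennreal z1 = \<Phi> z1" and f2: "ennreal z2 = \<Phi> z2" for z1 z2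
  proof -
    have "ennreal lam * (ennreal z2 * F z1) = ennreal z2 * ennreal z1"
      using f1 unfolding \<Phi>_def by (metis mult.left_commute mult.commute)
    also have "\<dots> = ennreal lam * (ennreal z1 * F z2)"
      using f2 unfolding \<Phi>_def by (metis mult.left_commute mult.commute)
    finally have eq: "ennreal z2 * F z1 = ennreal z1 * F z2"
      using lam_pos by (simp add: ennreal_mult_cancel_left)
    have "ennreal lam * F z2 < \<infinity>" using f2 unfolding \<Phi>_def by (metis ennreal_less_top infinity_ennreal_def)
    then have F2fin: "F z2 < \<infinity>" using lam_pos by (auto simp: ennreal_mult_less_top)
    define f where "f x = ennreal z2 * min (ennreal z1 * fst x) (snd x)" for x
    define g where "g x = ennreal z1 * min (ennreal z2 * fst x) (snd x)" for x
    have [measurable]: "f \<in> borel_measurable \<theta>" "g \<in> borel_measurable \<theta>"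
      unfolding f_def g_def by measurable
    have gf: "g x \<le> f x" for x unfolding f_def g_def using z by (intro pt_le) auto
    have intf: "integral\<^sup>N \<theta> f = ennreal z2 * F z1"
      unfolding f_def F_def by (rule nn_integral_cmult) measurable
    have intg: "integral\<^sup>N \<theta> g = ennreal z1 * F z2"
      unfolding g_def F_def by (rule nn_integral_cmult) measurable
    have gfin: "integral\<^sup>N \<theta> g \<noteq> \<infinity>"
      using F2fin by (simp add: intg ennreal_mult_eq_top_iff)
    have "(\<integral>\<^sup>+ x. f x - g x \<partial>\<theta>) = integral\<^sup>N \<theta> f - integral\<^sup>N \<theta> g"
      using gf gfin by (intro nn_integral_diff) auto
    also have "\<dots> = 0" using intf intg eq gfin by (simp add: diff_eq_0_iff_ennreal less_top)
    finally have "AE x in \<theta>. f x - g x = 0"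
      by (subst (asm) nn_integral_0_iff_AE) auto
    then have AEm: "AE x in \<theta>. min (ennreal z1 * fst x) (snd x) = ennreal z1 * fst x"
      using AED
    proof eventually_elim
      case (elim x)
      then have "f x \<le> g x" by (auto dest: ennreal_minus_eq_0)
      then show ?case using z elim unfolding f_def g_def by (intro pt_eq) auto
    qed
    have "F z1 = (\<integral>\<^sup>+ x. ennreal z1 * fst x \<partial>\<theta>)"
      unfolding F_def using AEm by (rule nn_integral_cong_AE)
    also have "\<dots> = ennreal z1 * (\<integral>\<^sup>+ x. fst x \<partial>\<theta>)" by (rule nn_integral_cmult) measurable
    finally have "ennreal z1 * 1 = ennreal z1 * (ennreal lam * (\<integral>\<^sup>+ x. fst x \<partial>\<theta>))"
      using f1 unfolding \<Phi>_def by (simp add: mult.left_commute)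
    then have "ennreal lam * (\<integral>\<^sup>+ x. fst x \<partial>\<theta>) = 1"
      using z by (subst (asm) ennreal_mult_cancel_left) auto
    then show False using rho by simp
  qed
  have Fscale: "F c = ennreal c * (\<integral>\<^sup>+ x. min (fst x) (ennreal (1/c) * snd x) \<partial>\<theta>)"
    if "c > 0" for c
  proof -
    have "F c = (\<integral>\<^sup>+ x. ennreal c * min (fst x) (ennreal (1/c) * snd x) \<partial>\<theta>)"
      unfolding F_def using that by (simp add: scale_min)
    also have "\<dots> = ennreal c * (\<integral>\<^sup>+ x. min (fst x) (ennreal (1/c) * snd x) \<partial>\<theta>)"
      by (rule nn_integral_cmult) measurable
    finally show ?thesis .
  qed
  have exa: "\<exists>a>0. a \<le> 1 \<and> ennreal a \<le> \<Phi> a"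
  proof -
    define h where "h n x = min (fst x) (ennreal (real (Suc n)) * snd x)" for n x
    have hm[measurable]: "h n \<in> borel_measurable \<theta>" for n unfolding h_def by measurable
    have hle: "h m x \<le> h n x" if "m \<le> n" for m n x
      unfolding h_def using that by (intro min.mono mult_right_mono ennreal_leI) auto
    have inc: "incseq h" using hle by (auto simp: incseq_def le_fun_def)
    have "AE x in \<theta>. (SUP n. h n x) = fst x" using AED
    proof eventually_elim
      case (elim x)
      show ?case
      proof (rule antisym)
        show "(SUP n. h n x) \<le> fst x" by (rule SUP_least) (simp add: h_def)
        show "fst x \<le> (SUP n. h n x)"
        proof (cases "snd x = top")
          case True
          then have "h 0 x = fst x" by (simp add: h_def)
          then show ?thesis by (metis SUP_upper UNIV_I)
        next
          case False
          then obtain d where d: "snd x = ennreal d" "d \<ge> 0" by (cases "snd x") auto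
          with elim have dpos: "d > 0" by auto
          show ?thesis
          proof (rule ccontr)
            assume "\<not> fst x \<le> (SUP n. h n x)"
            then have lt: "(SUP n. h n x) < fst x" by simp
            then have "(SUP n. h n x) < top" using top.not_eq_extremum by fastforce
            then obtain s where s: "(SUP n. h n x) = ennreal s" "s \<ge> 0"
              by (cases "(SUP n. h n x)") auto
            obtain n where n: "s < real (Suc n) * d" using arch_big[OF dpos] by blast
            have "h n x \<le> (SUP n. h n x)" by (rule SUP_upper) simp
            moreover have "ennreal s < h n x"
            proof -
              have e: "ennreal (real (Suc n)) * snd x = ennreal (real (Suc n) * d)"
                using d by (subst ennreal_mult) auto
              have "ennreal s < ennreal (real (Suc n) * d)"
                using n s dpos by (subst ennreal_less_iff) auto
              then show ?thesis unfolding h_def e using lt s by simp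
            qed
            ultimately show False using s by simp
          qed
        qed
      qed
    qed
    then have "(\<integral>\<^sup>+ x. fst x \<partial>\<theta>) = (\<integral>\<^sup>+ x. (SUP n. h n x) \<partial>\<theta>)"
      by (intro nn_integral_cong_AE) (auto elim: AE_mp)
    also have "\<dots> = (SUP n. integral\<^sup>N \<theta> (h n))"
      using inc by (intro nn_integral_monotone_convergence_SUP) auto
    finally have "1 < (SUP n. ennreal lam * integral\<^sup>N \<theta> (h n))"
      using rho by (simp add: SUP_mult_left_ennreal)
    then obtain n where n: "1 < ennreal lam * integral\<^sup>N \<theta> (h n)"
      by (auto simp: less_SUP_iff)
    define a where "a = 1 / real (Suc n)"
    have apos: "a > 0" "a \<le> 1" unfolding a_def by auto
    have "\<Phi> a = ennreal a * (ennreal lam * integral\<^sup>N \<theta> (h n))"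
      unfolding \<Phi>_def Fscale[OF apos(1)] by (simp add: a_def h_def[abs_def] mult.left_commute)
    moreover have "ennreal a * 1 \<le> ennreal a * (ennreal lam * integral\<^sup>N \<theta> (h n))"
      using n by (intro mult_left_mono) auto
    ultimately show ?thesis using apos by auto
  qed
  have exb: "\<exists>b\<ge>1. \<Phi> b \<le> ennreal b"
  proof -
    define g where "g n x = min (fst x) (ennreal (1 / real (Suc n)) * snd x)" for n x
    have gm[measurable]: "g n \<in> borel_measurable \<theta>" for n unfolding g_def by measurable
    have gle: "g (Suc n) x \<le> g n x" for n x
      unfolding g_def by (intro min.mono mult_right_mono ennreal_leI) (auto simp: frac_le)
    have g0: "(\<integral>\<^sup>+ x. g 0 x \<partial>\<theta>) < \<infinity>" using cond2 by (simp add: g_def)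
    have ginf: "(INF n. g n x) = fst x * indicator {y. snd y = \<infinity>} x" for x
    proof (cases "snd x = top")
      case True
      then have "g n x = fst x" for n by (simp add: g_def ennreal_mult_top)
      then show ?thesis using True by simp
    next
      case False
      then obtain d where d: "snd x = ennreal d" "d \<ge> 0" by (cases "snd x") auto
      have "(INF n. g n x) \<le> 0"
      proof (rule ennreal_le_epsilon)
        fix e :: real assume e: "0 < e"
        obtain n where n: "d / real (Suc n) < e" using arch_small[OF e d(2)] by blast
        have "(INF n. g n x) \<le> g n x" by (rule INF_lower) simp
        also have "\<dots> \<le> ennreal (1 / real (Suc n)) * snd x" unfolding g_def by simp
        also have "\<dots> = ennreal (d / real (Suc n))" using d by (simp only: ennreal_mult''[symmetric]) simp
        also have "\<dots> \<le> ennreal e" using n by (intro ennreal_leI) simp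
        finally show "(INF n. g n x) \<le> 0 + ennreal e" by simp
      qed
      then show ?thesis using False by simp
    qed
    have "(\<integral>\<^sup>+ x. fst x * indicator {y. snd y = \<infinity>} x \<partial>\<theta>) = (\<integral>\<^sup>+ x. (INF n. g n x) \<partial>\<theta>)"
      by (simp add: ginf)
    also have "\<dots> = (INF n. integral\<^sup>N \<theta> (g n))"
      using gle g0 by (intro nn_integral_monotone_convergence_INF_AE') auto
    finally have lt1: "ennreal lam * (INF n. integral\<^sup>N \<theta> (g n)) < 1" using cond1 by simp
    obtain n where n: "ennreal lam * integral\<^sup>N \<theta> (g n) < 1"
    proof (rule ccontr)
      assume "\<not> thesis"
      then have all: "1 \<le> ennreal lam * integral\<^sup>N \<theta> (g n)" for n using that not_less by blast
      have "ennreal (1 / lam) \<le> integral\<^sup>N \<theta> (g n)" for n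
      proof -
        have "ennreal (1/lam) * 1 \<le> ennreal (1/lam) * (ennreal lam * integral\<^sup>N \<theta> (g n))"
          using all by (intro mult_left_mono) auto
        also have "\<dots> = integral\<^sup>N \<theta> (g n)"
          using lam_pos by (simp add: mult.assoc[symmetric] ennreal_mult''[symmetric])
        finally show ?thesis by simp
      qed
      then have "ennreal (1 / lam) \<le> (INF n. integral\<^sup>N \<theta> (g n))" by (rule INF_greatest)
      then have "ennreal lam * ennreal (1 / lam) \<le> ennreal lam * (INF n. integral\<^sup>N \<theta> (g n))"
        by (rule mult_left_mono) simp
      moreover have "ennreal lam * ennreal (1 / lam) = 1"
        using lam_pos by (simp add: ennreal_mult''[symmetric])
      ultimately show False using lt1 by simp
    qed
    define b where "b = real (Suc n)"
    have bpos: "b > 0" "b \<ge> 1" unfolding b_def by auto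
    have "\<Phi> b = ennreal b * (ennreal lam * integral\<^sup>N \<theta> (g n))"
      unfolding \<Phi>_def Fscale[OF bpos(1)] by (simp add: b_def g_def[abs_def] mult.left_commute)
    also have "\<dots> \<le> ennreal b * 1"
      using n by (intro mult_left_mono) auto
    finally show ?thesis using bpos by auto
  qed
  obtain a where a: "a > 0" "ennreal a \<le> \<Phi> a" "a \<le> 1" using exa by blast
  obtain b where b: "b \<ge> 1" "\<Phi> b \<le> ennreal b" using exb by blast
  define S where "S = {z. a \<le> z \<and> z \<le> b \<and> ennreal z \<le> \<Phi> z}"
  have aS: "a \<in> S" using a b unfolding S_def by auto
  have bddS: "bdd_above S" unfolding S_def by (auto intro: bdd_aboveI[of _ b])
  define s where "s = Sup S"
  have as: "a \<le> s" unfolding s_def using aS bddS by (rule cSup_upper)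
  have sb: "s \<le> b" unfolding s_def using aS by (intro cSup_least) (auto simp: S_def)
  have \<Phi>s_fin: "\<Phi> s \<le> ennreal b" using \<Phi>mono[OF sb] b by simp
  define r where "r = enn2real (\<Phi> s)"
  have r: "\<Phi> s = ennreal r" "r \<ge> 0"
    using \<Phi>s_fin unfolding r_def by (auto simp: ennreal_enn2real_if top_unique enn2real_nonneg) 
  have sr: "s \<le> r"
    unfolding s_def
  proof (rule cSup_least)
    show "S \<noteq> {}" using aS by auto
    fix z assume "z \<in> S"
    then have "ennreal z \<le> \<Phi> s"
    proof -
      assume zS: "z \<in> S"
      have "z \<le> s" unfolding s_def using zS bddS by (rule cSup_upper)
      then have "\<Phi> z \<le> \<Phi> s" by (rule \<Phi>mono)
      moreover have "ennreal z \<le> \<Phi> z" using zS by (simp add: S_def)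
      ultimately show ?thesis by simp
    qed
    then show "z \<le> r" using r by (auto simp: ennreal_le_iff2) 
  qed
  have rS: "r \<in> S"
  proof -
    have "r \<le> b" using \<Phi>s_fin r b by (simp add: ennreal_le_iff)
    moreover have "ennreal r \<le> \<Phi> r" using \<Phi>mono[OF sr] r by simp
    ultimately show ?thesis using as sr unfolding S_def by auto
  qed
  have "r \<le> s" unfolding s_def using rS bddS by (rule cSup_upper)
  with sr have rs: "r = s" by simp
  have sol: "0 < s \<and> ennreal s = \<Phi> s" using rs r as a by simp
  show ?thesis
  proof (rule ex1I[of _ s])
    show "0 < s \<and> ennreal s = ennreal lam * (\<integral>\<^sup>+ x. min (ennreal s * fst x) (snd x) \<partial>\<theta>)"
      using sol by (simp add: \<Phi>_def F_def)
  next
    fix y assume y: "0 < y \<and> ennreal y = ennreal lam * (\<integral>\<^sup>+ x. min (ennreal y * fst x) (snd x) \<partial>\<theta>)"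
    then have y': "0 < y" "ennreal y = \<Phi> y" by (auto simp: \<Phi>_def F_def)
    show "y = s"
    proof (rule ccontr)
      assume "y \<noteq> s"
      then consider "y < s" | "s < y" by linarith
      then show False
        using uniq[of y s] uniq[of s y] y' sol by cases auto
    qed
  qed
qed

end
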